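(* Let $(X,\le)$ be a countable lower 1-transitive linear order, $I$ its invariant tree, and $\simeq$ the equivalence relation on $I$ defined below, with $[x]$ the $\simeq$-class of $x\in I$. If $x,y\in I$ satisfy $x\le y$ (i.e. $x\subseteq y$) and $x'\in[x]$, then there exists $y'\in[y]$ with $x'\le y'$.
   Context: A linear order $X$ is lower 1-transitive if $(-\infty,a]\cong(-\infty,b]$ for all $a,b\in X$, where $(-\infty,a]=\{x:x\le a\}$. An invariant partition of $X$ is a partition $\pi$ into convex subsets (parts) such that for all $a,b\in X$, every order isomorphism $f:(-\infty,a]\to(-\infty,b]$ and all $x,y\le a$: $x\sim_\pi y\iff f(x)\sim_\pi f(y)$. The invariant tree $I$ is the set of all parts of all invariant partitions of $X$, ordered by inclusion $\le\,=\,\subseteq$, with levels the invariant partitions (ordered by refinement); for a parent $p$ the children of $p$ (maximal proper sub-parts in $I$) are ordered by $\triangleleft$, induced from $\le$ on $X$. The right child of a parent is its $\triangleleft$-greatest child if one exists; all other children are left children. The tree of descendants of $v\in I$ is $\{u\in I:u\le v\}$ with the induced $\le$ and $\triangleleft$. The relation $\simeq$: for a level $s$ of $I$, $x\simeq_s y$ iff there are $x'\supseteq x$, $y'\supseteq y$ in $I$ and an isomorphism $\theta$ (preserving $\le$ and $\triangleleft$) from the tree of descendants of $x'$ onto that of $y'$ with $\theta(x)=y$, such that either $x'=y'$, or $x',y'$ lie on level $s$ and are both left children of a common vertex. Then $x\simeq y$ iff there is a finite sequence $x=x_0,\dots,x_n=y$ with $x_i\simeq_{s_i}x_{i+1}$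 for some levels $s_i$. *)

theory Defs
  imports Main "HOL-Library.Countable_Set"
begin

text \<open>The linear order X is the type 'a with its linorder structure.\<close>

definition down :: "'a::linorder \<Rightarrow> 'a set" where
  "down a = {x. x \<le> a}"

definition order_iso_on :: "('a::linorder \<Rightarrow> 'a) \<Rightarrow> 'a set \<Rightarrow> 'a set \<Rightarrow> bool" where
  "order_iso_on f A B \<longleftrightarrow> bij_betw f A B \<and> (\<forall>x\<in>A. \<forall>y\<in>A. x \<le> y \<longleftrightarrow> f x \<le> f y)"

definition lower_1_transitive :: "'a::linorder itself \<Rightarrow> bool" where
  "lower_1_transitive _ \<longleftrightarrow> (\<forall>a b::'a. \<exists>f. order_iso_on f (down a) (down b))"

definition convex :: "'a::linorder set \<Rightarrow> bool" where
  "convex p \<longleftrightarrow> (\<forall>x\<in>p. \<forall>z\<in>p. \<forall>y. x \<le> y \<and> y \<le> z \<longrightarrow> y \<in> p)"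

definition same_part :: "'a set set \<Rightarrow> 'a \<Rightarrow> 'a \<Rightarrow> bool" where
  "same_part \<pi> x y \<longleftrightarrow> (\<exists>p\<in>\<pi>. x \<in> p \<and> y \<in> p)"

definition convex_partition :: "'a::linorder set set \<Rightarrow> bool" where
  "convex_partition \<pi> \<longleftrightarrow>
     \<Union>\<pi> = UNIV \<and> (\<forall>p\<in>\<pi>. p \<noteq> {} \<and> convex p) \<and>
     (\<forall>p\<in>\<pi>. \<forall>q\<in>\<pi>. p \<noteq> q \<longrightarrow> p \<inter> q = {})"

definition invariant_partition :: "'a::linorder set set \<Rightarrow> bool" where
  "invariant_partition \<pi> \<longleftrightarrow> convex_partition \<pi> \<and>
     (\<forall>a b f. order_iso_on f (down a) (down b) \<longrightarrow>
        (\<forall>x\<in>down a. \<forall>y\<in>down a. same_part \<pi> x y \<longleftrightarrow> same_part \<pi> (f x) (f y)))"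

definition inv_tree :: "'a::linorder set set" where
  "inv_tree = \<Union>{\<pi>. invariant_partition \<pi>}"

definition child :: "'a::linorder set \<Rightarrow> 'a set \<Rightarrow> bool" where
  "child c p \<longleftrightarrow> c \<in> inv_tree \<and> p \<in> inv_tree \<and> c \<subset> p \<and>
     \<not> (\<exists>d\<in>inv_tree. c \<subset> d \<and> d \<subset> p)"

definition tri :: "'a::linorder set \<Rightarrow> 'a set \<Rightarrow> bool" where
  "tri u w \<longleftrightarrow> (\<exists>p. child u p \<and> child w p) \<and> (\<forall>x\<in>u. \<forall>y\<in>w. x < y)"

definition left_child :: "'a::linorder set \<Rightarrow> 'a set \<Rightarrow> bool" where
  "left_child c p \<longleftrightarrow> child c p \<and> (\<exists>d. child d p \<and> tri c d)"

definition desc :: "'a::linorder set \<Rightarrow> 'a set set" where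
  "desc v = {u \<in> inv_tree. u \<subseteq> v}"

definition tree_iso :: "('a::linorder set \<Rightarrow> 'a set) \<Rightarrow> 'a set \<Rightarrow> 'a set \<Rightarrow> bool" where
  "tree_iso \<theta> v w \<longleftrightarrow> bij_betw \<theta> (desc v) (desc w) \<and>
     (\<forall>u\<in>desc v. \<forall>u'\<in>desc v. (u \<subseteq> u' \<longleftrightarrow> \<theta> u \<subseteq> \<theta> u') \<and> (tri u u' \<longleftrightarrow> tri (\<theta> u) (\<theta> u')))"

definition sim_level :: "'a::linorder set set \<Rightarrow> 'a set \<Rightarrow> 'a set \<Rightarrow> bool" where
  "sim_level s x y \<longleftrightarrow> x \<in> inv_tree \<and> y \<in> inv_tree \<and>
     (\<exists>x' y' \<theta>. x' \<in> inv_tree \<and> y' \<in> inv_tree \<and> x \<subseteq> x' \<and> y \<subseteq> y' \<and>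
        tree_iso \<theta> x' y' \<and> \<theta> x = y \<and>
        (x' = y' \<or> (x' \<in> s \<and> y' \<in> s \<and> (\<exists>v. left_child x' v \<and> left_child y' v))))"

definition sim :: "'a::linorder set \<Rightarrow> 'a set \<Rightarrow> bool" where
  "sim = (\<lambda>x y. x \<in> inv_tree \<and> y \<in> inv_tree \<and>
     (\<lambda>u v. \<exists>s. invariant_partition s \<and> sim_level s u v)\<^sup>*\<^sup>* x y)"

end

theory Submission
  imports Defs
begin

lemma tree_mem: "p \<in> inv_tree \<Longrightarrow> \<exists>\<pi>. invariant_partition \<pi> \<and> p \<in> \<pi>"
  by (auto simp: inv_tree_def)

lemma tree_ne: "p \<in> inv_tree \<Longrightarrow> p \<noteq> {}"
  by (auto simp: inv_tree_def invariant_partition_def convex_partition_def)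

lemma nested_aux:
  fixes a b c :: "'a::linorder"
  assumes L: "lower_1_transitive TYPE('a)"
    and pi: "invariant_partition \<pi>" and p: "p \<in> \<pi>"
    and sg: "invariant_partition \<sigma>" and q: "q \<in> \<sigma>"
    and a: "a \<in> p" "a \<notin> q" and b: "b \<in> q" "b \<notin> p" and c: "c \<in> p" "c \<in> q"
    and ac: "a < c" and cb: "c < b"
  shows False
proof -
  obtain f where f: "order_iso_on f (down b) (down c)"
    using L unfolding lower_1_transitive_def by blast
  have fim: "f ` down b = down c" and mono: "\<And>x y. x \<in> down b \<Longrightarrow> y \<in> down b \<Longrightarrow> x \<le> y \<longleftrightarrow> f x \<le> f y"
    using f by (auto simp: order_iso_on_def bij_betw_def)
  have "a \<in> down c" using ac by (simp add: down_def)
  then obtain w where w: "w \<in> down b" "f w = a" using fim by (metis imageE)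
  have bb: "b \<in> down b" by (simp add: down_def)
  have "c \<in> down c" by (simp add: down_def)
  then obtain w' where w': "w' \<in> down b" "f w' = c" using fim by (metis imageE)
  have "f b \<in> down c" using fim bb by blast
  hence "f b \<le> c" by (simp add: down_def)
  moreover have "f w' \<le> f b" using mono[OF w'(1) bb] w'(1) by (simp add: down_def)
  ultimately have fb: "f b = c" using w' by simp
  have invp: "same_part \<pi> w b \<longleftrightarrow> same_part \<pi> (f w) (f b)"
    using pi f w(1) bb unfolding invariant_partition_def by blast
  have invs: "same_part \<sigma> w b \<longleftrightarrow> same_part \<sigma> (f w) (f b)"
    using sg f w(1) bb unfolding invariant_partition_def by blast
  have "same_part \<pi> a c" using p a c unfolding same_part_def by blast
  hence "same_part \<pi> w b" using invp w fb by simp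
  then obtain r where r: "r \<in> \<pi>" "w \<in> r" "b \<in> r" unfolding same_part_def by blast
  have cpi: "convex_partition \<pi>" and cs: "convex_partition \<sigma>"
    using pi sg by (auto simp: invariant_partition_def)
  have "c \<le> w"
  proof (rule ccontr)
    assume "\<not> c \<le> w"
    hence "w \<le> c" by simp
    have "convex r" using r(1) cpi unfolding convex_partition_def by blast
    hence "c \<in> r" using r(2,3) \<open>w \<le> c\<close> cb unfolding convex_def by (meson less_imp_le)
    hence "r = p" using r(1) p c(1) cpi unfolding convex_partition_def by blast
    thus False using r b by simp
  qed
  moreover have "w \<le> b" using w by (simp add: down_def)
  moreover have "convex q" using q cs unfolding convex_partition_def by blast
  ultimately have "w \<in> q" using b c unfolding convex_def by blast
  hence "same_part \<sigma> w b" using q b unfolding same_part_def by blast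
  hence "same_part \<sigma> a c" using invs w fb by simp
  then obtain r' where r': "r' \<in> \<sigma>" "a \<in> r'" "c \<in> r'" unfolding same_part_def by blast
  hence "r' = q" using q c(2) cs unfolding convex_partition_def by blast
  thus False using r' a by simp
qed

lemma nested:
  fixes p q :: "'a::linorder set"
  assumes L: "lower_1_transitive TYPE('a)"
    and "p \<in> inv_tree" "q \<in> inv_tree" "p \<inter> q \<noteq> {}"
  shows "p \<subseteq> q \<or> q \<subseteq> p"
proof (rule ccontr)
  assume "\<not> (p \<subseteq> q \<or> q \<subseteq> p)"
  then obtain a b c where a: "a \<in> p" "a \<notin> q" and b: "b \<in> q" "b \<notin> p" and c: "c \<in> p" "c \<in> q"
    using assms(4) by blast
  obtain \<pi> \<sigma> where pi: "invariant_partition \<pi>" "p \<in> \<pi>" and sg: "invariant_partition \<sigma>" "q \<in> \<sigma>"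
    using tree_mem assms(2,3) by blast
  have cp: "convex p" and cq: "convex q"
    using pi sg by (auto simp: invariant_partition_def convex_partition_def)
  have "a \<noteq> c" "b \<noteq> c" using a b c by auto
  consider "a < c" "c < b" | "b < c" "c < a" | "a < c" "b < c" | "c < a" "c < b"
    using \<open>a \<noteq> c\<close> \<open>b \<noteq> c\<close> by (meson linorder_neqE)
  thus False
  proof cases
    case 1 thus False using nested_aux[OF L pi sg a b c] by blast
  next
    case 2 thus False using nested_aux[OF L sg pi b a c(2) c(1)] by blast
  next
    case 3
    show False
    proof (cases "a \<le> b")
      case True thus False using cp a c 3 b unfolding convex_def by (meson less_imp_le)
    next
      case False thus False using cq a c 3 b unfolding convex_def by (meson less_imp_le not_le)
    qed
  next
    case 4
    show False
    proof (cases "a \<le> b")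
      case True thus False using cq a c 4 b unfolding convex_def by (meson less_imp_le)
    next
      case False thus False using cp a c 4 b unfolding convex_def by (meson less_imp_le not_le)
    qed
  qed
qed

lemma desc_tree: "u \<in> desc v \<Longrightarrow> u \<in> inv_tree" by (simp add: desc_def)

lemma step:
  fixes z w y :: "'a::linorder set"
  assumes L: "lower_1_transitive TYPE('a)"
    and R: "\<exists>s. invariant_partition s \<and> sim_level s z w"
    and y: "y \<in> inv_tree" "z \<subseteq> y"
  shows "\<exists>y'. (\<lambda>u v. \<exists>s. invariant_partition s \<and> sim_level s u v)\<^sup>*\<^sup>* y y' \<and> y' \<in> inv_tree \<and> w \<subseteq> y'"
proof -
  obtain s where s: "invariant_partition s" "sim_level s z w" using R by blast
  then obtain x1 y1 \<theta> where z: "z \<in> inv_tree" and x1: "x1 \<in> inv_tree" and y1: "y1 \<in> inv_tree"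
    and zx1: "z \<subseteq> x1" and wy1: "w \<subseteq> y1" and th: "tree_iso \<theta> x1 y1" and tz: "\<theta> z = w"
    and disj: "x1 = y1 \<or> (x1 \<in> s \<and> y1 \<in> s \<and> (\<exists>v. left_child x1 v \<and> left_child y1 v))"
    unfolding sim_level_def by blast
  have zne: "z \<noteq> {}" using tree_ne z by blast
  have "x1 \<inter> y \<noteq> {}" using zne zx1 y by blast
  hence nest: "y \<subseteq> x1 \<or> x1 \<subseteq> y" using nested[OF L x1 y(1)] by blast
  show ?thesis
  proof (cases "y \<subseteq> x1")
    case True
    have yd: "y \<in> desc x1" using True y by (simp add: desc_def)
    have zd: "z \<in> desc x1" using z zx1 by (simp add: desc_def)
    have bij: "bij_betw \<theta> (desc x1) (desc y1)" using th by (simp add: tree_iso_def)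
    have ty: "\<theta> y \<in> desc y1" using bij yd by (auto simp: bij_betw_def)
    have sub: "\<theta> z \<subseteq> \<theta> y" using th yd zd y(2) unfolding tree_iso_def by blast
    have "sim_level s y (\<theta> y)"
      unfolding sim_level_def
      using y(1) ty x1 y1 True th disj by (auto simp: desc_def)
    hence "(\<lambda>u v. \<exists>s. invariant_partition s \<and> sim_level s u v)\<^sup>*\<^sup>* y (\<theta> y)"
      using s(1) by blast
    thus ?thesis using ty sub tz desc_tree by blast
  next
    case False
    hence xy: "x1 \<subset> y" using nest by blast
    have "w \<subseteq> y"
    proof (cases "x1 = y1")
      case True thus ?thesis using wy1 xy by blast
    next
      case False
      then obtain v where v: "child x1 v" "child y1 v" using disj unfolding left_child_def by blast
      have vt: "v \<in> inv_tree" and xv: "x1 \<subset> v" and yv: "y1 \<subset> v"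
        using v unfolding child_def by auto
      have "x1 \<noteq> {}" using tree_ne x1 by blast
      hence "v \<inter> y \<noteq> {}" using xv xy by blast
      hence "v \<subseteq> y \<or> y \<subseteq> v" using nested[OF L vt y(1)] by blast
      moreover have "\<not> (y \<subset> v)" using v(1) xy y(1) unfolding child_def by blast
      ultimately have "v \<subseteq> y" by blast
      thus ?thesis using wy1 yv by blast
    qed
    thus ?thesis using y(1) by blast
  qed
qed

theorem lemma4p8:
  fixes x y x' :: "'a::linorder set"
  assumes "countable (UNIV :: 'a set)"
    and "lower_1_transitive TYPE('a)"
    and "x \<in> inv_tree" and "y \<in> inv_tree" and "x \<subseteq> y"
    and "sim x x'"
  shows "\<exists>y'. sim y y' \<and> x' \<subseteq> y'"
proof -
  let ?R = "\<lambda>u v. \<exists>s. invariant_partition s \<and> sim_level s u v"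
  have rt: "?R\<^sup>*\<^sup>* x x'" using assms(6) by (simp add: sim_def)
  have "\<exists>y'. ?R\<^sup>*\<^sup>* y y' \<and> y' \<in> inv_tree \<and> x' \<subseteq> y'"
    using rt
  proof (induction rule: rtranclp_induct)
    case base thus ?case using assms(4,5) by blast
  next
    case (step z w)
    then obtain y'' where y'': "?R\<^sup>*\<^sup>* y y''" "y'' \<in> inv_tree" "z \<subseteq> y''" by blast
    obtain y''' where "?R\<^sup>*\<^sup>* y'' y'''" "y''' \<in> inv_tree" "w \<subseteq> y'''"
      using Submission.step[OF assms(2) step(2) y''(2,3)] by blast
    thus ?case using y''(1) by (meson rtranclp_trans)
  qed
  thus ?thesis using assms(4) by (auto simp: sim_def)
qed

end
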